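(* For every $s>0$, the Laplace transform $\mathcal L_{\mathsf P}(s)=\mathbb E[e^{-s\mathsf P}]$ (without conditioning on the number of points in $\mathcal C$) equals $$\mathcal L_{\mathsf P}(s)=\exp\Big\{-\lambda\pi\,\mathbb E\Big[\min\{D^\alpha,\tfrac{\mathsf g}{T}\}^{\frac2\alpha}\Big(1-e^{-s\mathsf g\max\{D^{-\alpha},\frac T{\mathsf g}\}}\Big)+(s\mathsf g)^{\frac2\alpha}\,\Gamma\Big(1-\tfrac2\alpha,\,s\mathsf g\max\{D^{-\alpha},\tfrac T{\mathsf g}\}\Big)\Big]\Big\}.$$
   Context: $\Phi=\{\mathsf x_i\}$ is a homogeneous Poisson point process on $\mathbb R^2$ with density $\lambda>0$, with i.i.d. marks $\mathsf g_i\ge0$ independent of $\Phi$, $\mathbb E[\mathsf g]=1$, $\mathbb E[\mathsf g^2]<\infty$. Fix $\alpha>2$, $D>0$, $T\ge0$; $\mathcal C=b(o,D)$ is the disk of radius $D$ centered at the origin. The useful power is $\mathsf P=\sum_{\mathsf x_i\in\Phi\cap\mathcal C}\mathsf g_i\|\mathsf x_i\|^{-\alpha}\mathbf 1(\mathsf g_i\|\mathsf x_i\|^{-\alpha}\ge T)$. $\Gamma(a,x)=\int_x^\infty t^{a-1}e^{-t}dt$. Conventions for $T=0$: $\mathsf g/T=+\infty$ and $T/\mathsf g=0$. *)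

theory Defs
  imports "HOL-Probability.Probability"
begin

definition upper_Gamma :: "real \<Rightarrow> real \<Rightarrow> real" where
  "upper_Gamma a x = (LBINT t:{x<..}. t powr (a - 1) * exp (- t))"

definition poisson_random_measure ::
  "'w measure \<Rightarrow> ('w \<Rightarrow> 'b measure) \<Rightarrow> 'b measure \<Rightarrow> bool" where
  "poisson_random_measure M N \<mu> \<longleftrightarrow>
     prob_space M \<and>
     (\<forall>\<omega>\<in>space M. sets (N \<omega>) = sets \<mu>) \<and>
     (\<forall>A\<in>sets \<mu>. (\<lambda>\<omega>. emeasure (N \<omega>) A) \<in> borel_measurable M) \<and>
     (\<forall>A\<in>sets \<mu>. emeasure \<mu> A < \<infinity> \<longrightarrow>
        (\<forall>k::nat. measure M {\<omega>\<in>space M. emeasure (N \<omega>) A = of_nat k}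
             = exp (- enn2real (emeasure \<mu> A)) * enn2real (emeasure \<mu> A) ^ k / fact k)) \<and>
     (\<forall>A\<in>sets \<mu>. emeasure \<mu> A = \<infinity> \<longrightarrow> (AE \<omega> in M. emeasure (N \<omega>) A = \<infinity>)) \<and>
     (\<forall>(I::nat set) A. finite I \<longrightarrow> A ` I \<subseteq> sets \<mu> \<longrightarrow> disjoint_family_on A I \<longrightarrow>
        prob_space.indep_vars M (\<lambda>_. borel) (\<lambda>i \<omega>. emeasure (N \<omega>) (A i)) I)"

text \<open>Intensity of the independently marked homogeneous PPP on R^2 with density lambda
  and mark distribution G: lambda * Lebesgue (x) G on R^2 x R.\<close>
definition marked_intensity :: "real \<Rightarrow> real measure \<Rightarrow> ((real \<times> real) \<times> real) measure" where
  "marked_intensity lam G = scale_measure (ennreal lam) (lborel \<Otimes>\<^sub>M G)"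

definition useful_contrib :: "real \<Rightarrow> real \<Rightarrow> real \<Rightarrow> (real \<times> real) \<times> real \<Rightarrow> real" where
  "useful_contrib \<alpha> D T z =
     (let x = fst z; g = snd z in
        indicator (cball 0 D) x * (if g * norm x powr (- \<alpha>) \<ge> T then g * norm x powr (- \<alpha>) else 0))"

text \<open>Useful power P = sum over the marked points of the contributions (integral w.r.t. the
  counting measure N(omega)).\<close>
definition useful_power ::
  "('w \<Rightarrow> ((real \<times> real) \<times> real) measure) \<Rightarrow> real \<Rightarrow> real \<Rightarrow> real \<Rightarrow> 'w \<Rightarrow> real" where
  "useful_power N \<alpha> D T \<omega> = enn2real (\<integral>\<^sup>+ z. ennreal (useful_contrib \<alpha> D T z) \<partial>N \<omega>)"

text \<open>min{D^alpha, g/T} with the convention g/T = +infinity for T = 0.\<close>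
definition min_DT :: "real \<Rightarrow> real \<Rightarrow> real \<Rightarrow> real \<Rightarrow> real" where
  "min_DT \<alpha> D T g = (if T = 0 then D powr \<alpha> else min (D powr \<alpha>) (g / T))"

text \<open>max{D^(-alpha), T/g} with the convention T/g = 0 for T = 0 (for g = 0 the value is
  irrelevant since it is multiplied by g = 0).\<close>
definition max_DT :: "real \<Rightarrow> real \<Rightarrow> real \<Rightarrow> real \<Rightarrow> real" where
  "max_DT \<alpha> D T g = (if T = 0 then D powr (- \<alpha>) else max (D powr (- \<alpha>)) (T / g))"

end

theory Submission
  imports Defs "HOL-Analysis.Ball_Volume"
begin

lemma pair_sf_lborel: "pair_sigma_finite (lborel::('a::euclidean_space) measure) (lborel::('b::euclidean_space) measure)"
  by (simp add: pair_sigma_finite_def lborel.sigma_finite_measure_axioms)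

lemma one_minus_exp_nn:
  fixes v :: real assumes "0 \<le> v"
  shows "ennreal (1 - exp (- v)) = (\<integral>\<^sup>+t. ennreal (exp (- t)) * indicator {0..v} t \<partial>lborel)"
proof -
  have "(\<integral>\<^sup>+t. ennreal (exp (- t)) * indicator {0..v} t \<partial>lborel) = ennreal (- exp (- v) - - exp (- 0))"
    by (rule nn_integral_FTC_Icc) (auto intro!: derivative_eq_intros assms)
  then show ?thesis by simp
qed

lemma upper_Gamma_nn:
  fixes a x :: real assumes x: "0 < x" and a: "a \<le> 1"
  shows "(\<integral>\<^sup>+t. ennreal (t powr (a - 1) * exp (- t)) * indicator {x<..} t \<partial>lborel) = ennreal (upper_Gamma a x)"
proof -
  define h where "h t = indicator {x<..} t * (t powr (a - 1) * exp (- t))" for t :: real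
  have e: "(\<integral>\<^sup>+t. ennreal (exp (- t)) * indicator {x..} t \<partial>lborel) = ennreal (exp (- x))"
  proof -
    have l: "((\<lambda>t::real. exp (- t)) \<longlongrightarrow> 0) at_top"
      using filterlim_compose[OF exp_at_bot filterlim_uminus_at_bot_at_top] by (simp add: o_def)
    have "((\<lambda>t::real. - exp (- t)) \<longlongrightarrow> 0) at_top" using tendsto_minus[OF l] by simp
    then show ?thesis
      by (subst nn_integral_FTC_atLeast[where F="\<lambda>t. - exp (- t)" and T=0])
         (auto intro!: derivative_eq_intros)
  qed
  have hm: "h \<in> borel_measurable lborel" unfolding h_def by measurable
  have hnn: "0 \<le> h t" for t unfolding h_def by (auto simp: indicator_def)
  have "(\<integral>\<^sup>+t. ennreal (h t) \<partial>lborel) \<le> (\<integral>\<^sup>+t. ennreal (x powr (a - 1)) * (ennreal (exp (- t)) * indicator {x..} t) \<partial>lborel)"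
  proof (intro nn_integral_mono)
    fix t show "ennreal (h t) \<le> ennreal (x powr (a - 1)) * (ennreal (exp (- t)) * indicator {x..} t)"
    proof (cases "x < t")
      case True
      have "t powr (a - 1) \<le> x powr (a - 1)" using True x a by (intro powr_mono2') auto
      then have "t powr (a - 1) * exp (- t) \<le> x powr (a - 1) * exp (- t)" by (intro mult_right_mono) auto
      then show ?thesis using True by (auto simp: h_def ennreal_mult'[symmetric] indicator_def)
    qed (auto simp: h_def indicator_def)
  qed
  also have "\<dots> = ennreal (x powr (a - 1)) * ennreal (exp (- x))"
    by (subst nn_integral_cmult) (auto simp: e)
  finally have fin: "(\<integral>\<^sup>+t. ennreal (h t) \<partial>lborel) < \<infinity>"
    by (auto simp: ennreal_mult'[symmetric] top_unique less_top[symmetric])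
  have int: "integrable lborel h" by (rule integrableI_nonneg) (use hm hnn fin in auto)
  have "(\<integral>\<^sup>+t. ennreal (t powr (a - 1) * exp (- t)) * indicator {x<..} t \<partial>lborel) = (\<integral>\<^sup>+t. ennreal (h t) \<partial>lborel)"
    by (intro nn_integral_cong) (auto simp: h_def indicator_def)
  also have "\<dots> = ennreal (integral\<^sup>L lborel h)"
    by (rule nn_integral_eq_integral) (use int hnn in auto)
  also have "integral\<^sup>L lborel h = upper_Gamma a x"
    by (simp add: upper_Gamma_def set_lebesgue_integral_def h_def[abs_def])
  finally show ?thesis .
qed


lemma uc_nonneg: "0 \<le> T \<Longrightarrow> 0 \<le> useful_contrib \<alpha> D T z"
  by (auto simp: useful_contrib_def Let_def indicator_def)

lemma powr_le_iff_aux: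
  fixes r c \<alpha> :: real assumes "0 \<le> r" "0 \<le> c" "0 < \<alpha>"
  shows "r \<le> c \<longleftrightarrow> r powr \<alpha> \<le> c powr \<alpha>"
  using assms by (metis linorder_not_le powr_less_mono2 powr_mono2 less_imp_le)

lemma rpow_le_iff:
  fixes r c \<alpha> :: real assumes "0 \<le> r" "0 < c" "0 < \<alpha>"
  shows "r \<le> c powr (1/\<alpha>) \<longleftrightarrow> r powr \<alpha> \<le> c"
proof -
  have "r \<le> c powr (1/\<alpha>) \<longleftrightarrow> r powr \<alpha> \<le> (c powr (1/\<alpha>)) powr \<alpha>"
    using assms by (intro powr_le_iff_aux) auto
  also have "(c powr (1/\<alpha>)) powr \<alpha> = c" using assms by (simp add: powr_powr)
  finally show ?thesis .
qed

lemma min_DT_pos: "0 < g \<Longrightarrow> 0 < D \<Longrightarrow> 0 \<le> T \<Longrightarrow> 0 < min_DT \<alpha> D T g"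
  by (auto simp: min_DT_def)

lemma set_char:
  fixes g t s \<alpha> D T :: real
  assumes g: "0 < g" and t: "0 < t" and s: "0 < s" and a: "0 < \<alpha>" and D: "0 < D" and T: "0 \<le> T"
  shows "{x. t \<le> s * useful_contrib \<alpha> D T (x, g)} = cball 0 ((min (min_DT \<alpha> D T g) (s*g/t)) powr (1/\<alpha>)) - {0}"
proof (intro set_eqI iffI)
  define c where "c = min (min_DT \<alpha> D T g) (s*g/t)"
  have c: "0 < c" using min_DT_pos[OF g D T] g t s by (auto simp: c_def)
  fix x :: "real \<times> real"
  {
    assume "x \<noteq> 0"
    define q where "q = norm x powr \<alpha>"
    have q: "0 < q" using \<open>x \<noteq> 0\<close> by (simp add: q_def)
    have nx: "norm x powr (- \<alpha>) = 1 / q" by (simp add: q_def powr_minus_divide)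
    have 1: "norm x \<le> D \<longleftrightarrow> q \<le> D powr \<alpha>" unfolding q_def using D a by (intro powr_le_iff_aux) auto
    have 2: "T \<le> g * (1/q) \<longleftrightarrow> T * q \<le> g" using q by (simp add: field_simps)
    have 3: "t \<le> s * (g * (1/q)) \<longleftrightarrow> q \<le> s * g / t" using q t by (simp add: field_simps)
    have 4: "q \<le> min_DT \<alpha> D T g \<longleftrightarrow> q \<le> D powr \<alpha> \<and> T * q \<le> g"
      using T g q by (auto simp: min_DT_def field_simps)
    have "t \<le> s * useful_contrib \<alpha> D T (x, g) \<longleftrightarrow> norm x \<le> D \<and> T \<le> g * (1/q) \<and> t \<le> s * (g * (1/q))"
      using t s by (auto simp: useful_contrib_def indicator_def nx)
    also have "\<dots> \<longleftrightarrow> q \<le> c" unfolding 1 2 3 c_def using 4 by auto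
    also have "\<dots> \<longleftrightarrow> norm x \<le> c powr (1/\<alpha>)" unfolding q_def using c a by (intro rpow_le_iff[symmetric]) auto
    finally have "t \<le> s * useful_contrib \<alpha> D T (x, g) \<longleftrightarrow> norm x \<le> c powr (1/\<alpha>)" .
  } note * = this
  have z: "\<not> t \<le> s * useful_contrib \<alpha> D T (0, g)" using t by (simp add: useful_contrib_def indicator_def)
  { assume "x \<in> {x. t \<le> s * useful_contrib \<alpha> D T (x, g)}"
    then show "x \<in> cball 0 ((min (min_DT \<alpha> D T g) (s*g/t)) powr (1/\<alpha>)) - {0}"
      using * z by (cases "x = 0") (auto simp: c_def) }
  { assume "x \<in> cball 0 ((min (min_DT \<alpha> D T g) (s*g/t)) powr (1/\<alpha>)) - {0}"
    then show "x \<in> {x. t \<le> s * useful_contrib \<alpha> D T (x, g)}"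
      using * by (auto simp: c_def) }
qed

lemma emeasure_cball_minus0:
  fixes r :: real assumes "0 \<le> r"
  shows "emeasure lborel (cball (0::real\<times>real) r - {0}) = ennreal (pi * r^2)"
proof -
  have "emeasure lborel (cball (0::real\<times>real) r - {0}) = emeasure lborel (cball (0::real\<times>real) r)"
    by (rule emeasure_Diff_null_set) auto
  also have "\<dots> = ennreal (pi * r^2)" using assms by (simp add: emeasure_cball unit_ball_vol_2 power2_eq_square)
  finally show ?thesis .
qed

lemma cball_borel[measurable]: "cball (0::real\<times>real) D \<in> sets borel"
  by simp

lemma uc_meas2: "useful_contrib \<alpha> D T \<in> borel_measurable (borel \<Otimes>\<^sub>M borel)"
  unfolding useful_contrib_def Let_def by measurable

lemma uc_meas[measurable]: "useful_contrib \<alpha> D T \<in> borel_measurable borel"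
  using uc_meas2 by (simp add: borel_prod)

lemma inner_pos:
  fixes g s \<alpha> D T :: real
  assumes g: "0 < g" and s: "0 < s" and a: "0 < \<alpha>" and D: "0 < D" and T: "0 \<le> T"
  shows "(\<integral>\<^sup>+x. ennreal (1 - exp (- (s * useful_contrib \<alpha> D T (x, g)))) \<partial>lborel)
       = (\<integral>\<^sup>+t. ennreal (exp (- t)) * indicator {0<..} t * ennreal (pi * (min (min_DT \<alpha> D T g) (s*g/t)) powr (2/\<alpha>)) \<partial>lborel)"
proof -
  define v where "v x = s * useful_contrib \<alpha> D T (x, g)" for x
  have vm[measurable]: "v \<in> borel_measurable borel" unfolding v_def by measurable
  have vnn: "0 \<le> v x" for x unfolding v_def using s uc_nonneg[OF T] by auto
  have "(\<integral>\<^sup>+x. ennreal (1 - exp (- (s * useful_contrib \<alpha> D T (x, g)))) \<partial>lborel)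
     = (\<integral>\<^sup>+x. \<integral>\<^sup>+t. ennreal (exp (- t)) * indicator {0..v x} t \<partial>lborel \<partial>lborel)"
    by (intro nn_integral_cong) (simp add: one_minus_exp_nn vnn v_def[symmetric])
  also have "\<dots> = (\<integral>\<^sup>+t. \<integral>\<^sup>+x. ennreal (exp (- t)) * indicator {0..v x} t \<partial>lborel \<partial>lborel)"
  proof (rule pair_sigma_finite.Fubini'[symmetric])
    show "pair_sigma_finite (lborel::(real\<times>real) measure) (lborel::real measure)"
      by (simp add: pair_sigma_finite_def lborel.sigma_finite_measure_axioms)
    have "(\<lambda>(x, t). ennreal (exp (- t)) * indicator {0..v x} t) =
          (\<lambda>p. ennreal (exp (- snd p)) * (if 0 \<le> snd p \<and> snd p \<le> v (fst p) then 1 else 0))"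
      by (auto simp: fun_eq_iff indicator_def)
    also have "\<dots> \<in> borel_measurable (lborel \<Otimes>\<^sub>M lborel)" by measurable
    finally show "(\<lambda>(x, t). ennreal (exp (- t)) * indicator {0..v x} t) \<in> borel_measurable (lborel \<Otimes>\<^sub>M lborel)" .
  qed
  also have "\<dots> = (\<integral>\<^sup>+t. ennreal (exp (- t)) * emeasure lborel {x. 0 \<le> t \<and> t \<le> v x} \<partial>lborel)"
  proof (intro nn_integral_cong)
    fix t :: real
    have "(\<integral>\<^sup>+x. ennreal (exp (- t)) * indicator {0..v x} t \<partial>lborel)
        = (\<integral>\<^sup>+x. ennreal (exp (- t)) * indicator {x. 0 \<le> t \<and> t \<le> v x} x \<partial>lborel)"
      by (intro nn_integral_cong) (auto simp: indicator_def)
    also have "\<dots> = ennreal (exp (- t)) * emeasure lborel {x. 0 \<le> t \<and> t \<le> v x}"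
      by (rule nn_integral_cmult_indicator) measurable
    finally show "(\<integral>\<^sup>+x. ennreal (exp (- t)) * indicator {0..v x} t \<partial>lborel) = ennreal (exp (- t)) * emeasure lborel {x. 0 \<le> t \<and> t \<le> v x}" .
  qed
  also have "\<dots> = (\<integral>\<^sup>+t. ennreal (exp (- t)) * indicator {0<..} t * ennreal (pi * (min (min_DT \<alpha> D T g) (s*g/t)) powr (2/\<alpha>)) \<partial>lborel)"
  proof (intro nn_integral_cong_AE)
    show "AE t in lborel. ennreal (exp (- t)) * emeasure lborel {x. 0 \<le> t \<and> t \<le> v x} =
       ennreal (exp (- t)) * indicator {0<..} t * ennreal (pi * (min (min_DT \<alpha> D T g) (s*g/t)) powr (2/\<alpha>))"
      using AE_lborel_singleton[of 0]
    proof eventually_elim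
      case (elim t)
      show ?case
      proof (cases "t < 0")
        case True then show ?thesis by (simp add: indicator_def)
      next
        case False
        with elim have t: "0 < t" by auto
        define c where "c = min (min_DT \<alpha> D T g) (s*g/t)"
        have c: "0 < c" using min_DT_pos[OF g D T] g t s by (auto simp: c_def)
        have "{x. 0 \<le> t \<and> t \<le> v x} = cball 0 (c powr (1/\<alpha>)) - {0}"
          using set_char[OF g t s a D T] t by (simp add: v_def c_def)
        then have "emeasure lborel {x. 0 \<le> t \<and> t \<le> v x} = ennreal (pi * (c powr (1/\<alpha>))^2)"
          by (simp add: emeasure_cball_minus0)
        also have "(c powr (1/\<alpha>))^2 = c powr (2/\<alpha>)"
          using c by (simp add: powr_realpow[symmetric] powr_powr)
        finally show ?thesis using t by (simp add: c_def indicator_def)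
      qed
    qed
  qed
  finally show ?thesis .
qed


lemma t_integral:
  fixes m0 b \<alpha> :: real
  assumes m0: "0 < m0" and b: "0 < b" and a: "2 < \<alpha>"
  shows "(\<integral>\<^sup>+t. ennreal (exp (- t)) * indicator {0<..} t * ennreal (pi * (min m0 (b/t)) powr (2/\<alpha>)) \<partial>lborel)
       = ennreal (pi * (m0 powr (2/\<alpha>) * (1 - exp (- (b/m0))) + b powr (2/\<alpha>) * upper_Gamma (1 - 2/\<alpha>) (b/m0)))"
proof -
  define t0 where "t0 = b / m0"
  have t0: "0 < t0" using m0 b by (simp add: t0_def)
  have "(\<integral>\<^sup>+t. ennreal (exp (- t)) * indicator {0<..} t * ennreal (pi * (min m0 (b/t)) powr (2/\<alpha>)) \<partial>lborel)
     = (\<integral>\<^sup>+t. ennreal (pi * m0 powr (2/\<alpha>)) * (ennreal (exp (- t)) * indicator {0..t0} t)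
          + ennreal (pi * b powr (2/\<alpha>)) * (ennreal (t powr ((1 - 2/\<alpha>) - 1) * exp (- t)) * indicator {t0<..} t) \<partial>lborel)"
  proof (intro nn_integral_cong_AE)
    show "AE t in lborel. ennreal (exp (- t)) * indicator {0<..} t * ennreal (pi * (min m0 (b/t)) powr (2/\<alpha>)) =
       ennreal (pi * m0 powr (2/\<alpha>)) * (ennreal (exp (- t)) * indicator {0..t0} t)
          + ennreal (pi * b powr (2/\<alpha>)) * (ennreal (t powr ((1 - 2/\<alpha>) - 1) * exp (- t)) * indicator {t0<..} t)"
      using AE_lborel_singleton[of 0]
    proof eventually_elim
      case (elim t)
      show ?case
      proof (cases "t < 0")
        case True then show ?thesis using t0 by (simp add: indicator_def)
      next
        case False
        with elim have t: "0 < t" by auto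
        show ?thesis
        proof (cases "t \<le> t0")
          case True
          then have "m0 \<le> b / t" using t m0 by (simp add: t0_def field_simps)
          then show ?thesis using True t
            by (simp add: indicator_def ennreal_mult'[symmetric] mult_ac)
        next
          case False
          then have "b / t < m0" using t m0 by (simp add: t0_def field_simps)
          then have "min m0 (b/t) = b / t" by simp
          moreover have "(b/t) powr (2/\<alpha>) = b powr (2/\<alpha>) * t powr ((1 - 2/\<alpha>) - 1)"
            using b t by (simp add: powr_divide powr_minus_divide)
          ultimately show ?thesis using False t
            by (simp add: indicator_def ennreal_mult'[symmetric] mult_ac)
        qed
      qed
    qed
  qed
  also have "\<dots> = ennreal (pi * m0 powr (2/\<alpha>)) * (\<integral>\<^sup>+t. ennreal (exp (- t)) * indicator {0..t0} t \<partial>lborel)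
      + ennreal (pi * b powr (2/\<alpha>)) * (\<integral>\<^sup>+t. ennreal (t powr ((1 - 2/\<alpha>) - 1) * exp (- t)) * indicator {t0<..} t \<partial>lborel)"
    by (subst nn_integral_add) (auto simp: nn_integral_cmult)
  also have "\<dots> = ennreal (pi * m0 powr (2/\<alpha>)) * ennreal (1 - exp (- t0))
      + ennreal (pi * b powr (2/\<alpha>)) * ennreal (upper_Gamma (1 - 2/\<alpha>) t0)"
  proof -
    have A: "(\<integral>\<^sup>+t. ennreal (exp (- t)) * indicator {0..t0} t \<partial>lborel) = ennreal (1 - exp (- t0))"
      using t0 by (intro one_minus_exp_nn[symmetric]) auto
    have B: "(\<integral>\<^sup>+t. ennreal (t powr ((1 - 2/\<alpha>) - 1) * exp (- t)) * indicator {t0<..} t \<partial>lborel) = ennreal (upper_Gamma (1 - 2/\<alpha>) t0)"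
      using t0 a by (intro upper_Gamma_nn) auto
    show ?thesis by (simp only: A B)
  qed
  also have "\<dots> = ennreal (pi * (m0 powr (2/\<alpha>) * (1 - exp (- t0)) + b powr (2/\<alpha>) * upper_Gamma (1 - 2/\<alpha>) t0))"
  proof -
    have "0 \<le> upper_Gamma (1 - 2/\<alpha>) t0"
    proof -
      show ?thesis unfolding upper_Gamma_def set_lebesgue_integral_def
        by (intro integral_nonneg_AE AE_I2) (simp add: indicator_def)
    qed
    moreover have "0 \<le> 1 - exp (- t0)" using t0 by simp
    ultimately show ?thesis
      by (simp add: ennreal_mult'[symmetric] ennreal_plus[symmetric] distrib_left mult_ac del: ennreal_plus)
  qed
  finally show ?thesis by (simp add: t0_def)
qed


definition Fg :: "real \<Rightarrow> real \<Rightarrow> real \<Rightarrow> real \<Rightarrow> real \<Rightarrow> real" where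
  "Fg \<alpha> D T s g = min_DT \<alpha> D T g powr (2 / \<alpha>) * (1 - exp (- s * g * max_DT \<alpha> D T g))
          + (s * g) powr (2 / \<alpha>) * upper_Gamma (1 - 2 / \<alpha>) (s * g * max_DT \<alpha> D T g)"

lemma max_DT_inv: "0 < g \<Longrightarrow> 0 < D \<Longrightarrow> 0 \<le> T \<Longrightarrow> max_DT \<alpha> D T g = 1 / min_DT \<alpha> D T g"
  by (auto simp: max_DT_def min_DT_def powr_minus_divide max_def min_def field_simps)

lemma inner_formula:
  fixes g s \<alpha> D T :: real
  assumes g: "0 \<le> g" and s: "0 < s" and a: "2 < \<alpha>" and D: "0 < D" and T: "0 \<le> T"
  shows "(\<integral>\<^sup>+x. ennreal (1 - exp (- (s * useful_contrib \<alpha> D T (x, g)))) \<partial>lborel) = ennreal (pi * Fg \<alpha> D T s g)"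
proof (cases "g = 0")
  case True
  have "useful_contrib \<alpha> D T (x, 0) = 0" for x by (simp add: useful_contrib_def)
  then show ?thesis using True by (simp add: Fg_def)
next
  case False
  with g have g: "0 < g" by simp
  have m: "0 < min_DT \<alpha> D T g" using min_DT_pos[OF g D T] .
  have "(\<integral>\<^sup>+x. ennreal (1 - exp (- (s * useful_contrib \<alpha> D T (x, g)))) \<partial>lborel)
       = (\<integral>\<^sup>+t. ennreal (exp (- t)) * indicator {0<..} t * ennreal (pi * (min (min_DT \<alpha> D T g) (s*g/t)) powr (2/\<alpha>)) \<partial>lborel)"
    using a by (intro inner_pos g s D T) auto
  also have "\<dots> = ennreal (pi * (min_DT \<alpha> D T g powr (2/\<alpha>) * (1 - exp (- (s*g/min_DT \<alpha> D T g))) + (s*g) powr (2/\<alpha>) * upper_Gamma (1 - 2/\<alpha>) (s*g/min_DT \<alpha> D T g)))"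
    using m g s a by (intro t_integral) auto
  also have "\<dots> = ennreal (pi * Fg \<alpha> D T s g)"
    by (simp add: Fg_def max_DT_inv[OF g D T])
  finally show ?thesis .
qed

lemma upper_Gamma_meas[measurable]: "upper_Gamma a \<in> borel_measurable borel"
proof -
  have "(\<lambda>x. upper_Gamma a x) = (\<lambda>x. \<integral>t. (if x < t then t powr (a - 1) * exp (- t) else 0) \<partial>lborel)"
    by (auto simp: fun_eq_iff upper_Gamma_def set_lebesgue_integral_def indicator_def intro!: Bochner_Integration.integral_cong)
  also have "\<dots> \<in> borel_measurable borel"
    by (intro lborel.borel_measurable_lebesgue_integral) measurable
  finally show ?thesis by (simp add: fun_eq_iff)
qed

lemma Fg_meas[measurable]: "Fg \<alpha> D T s \<in> borel_measurable borel"
  unfolding Fg_def min_DT_def max_DT_def by measurable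

lemma Fg_nonneg:
  assumes g: "0 \<le> g" and s: "0 < s" and a: "2 < \<alpha>" and D: "0 < D" and T: "0 \<le> T"
  shows "0 \<le> Fg \<alpha> D T s g"
proof -
  have "ennreal (pi * Fg \<alpha> D T s g) = (\<integral>\<^sup>+x. ennreal (1 - exp (- (s * useful_contrib \<alpha> D T (x, g)))) \<partial>lborel)"
    using inner_formula[OF assms] by simp
  show ?thesis
  proof (cases "g = 0")
    case True then show ?thesis by (simp add: Fg_def)
  next
    case False
    then have g: "0 < g" using g by simp
    have m: "0 < min_DT \<alpha> D T g" using min_DT_pos[OF g D T] .
    have mx: "0 < max_DT \<alpha> D T g" using m by (simp add: max_DT_inv[OF g D T])
    have "0 \<le> upper_Gamma (1 - 2/\<alpha>) (s * g * max_DT \<alpha> D T g)"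
      unfolding upper_Gamma_def set_lebesgue_integral_def
      by (intro integral_nonneg_AE AE_I2) (simp add: indicator_def)
    moreover have "0 \<le> 1 - exp (- s * g * max_DT \<alpha> D T g)" using s g mx by simp
    ultimately show ?thesis unfolding Fg_def by simp
  qed
qed

lemma partB:
  fixes lam \<alpha> D T s :: real and G :: "real measure"
  assumes lam: "0 < lam" and a: "2 < \<alpha>" and D: "0 < D" and T: "0 \<le> T" and s: "0 < s"
    and G: "prob_space G" "sets G = sets borel" "AE g in G. 0 \<le> g"
  shows "(\<integral>\<^sup>+z. ennreal (1 - exp (- (s * useful_contrib \<alpha> D T z))) \<partial>marked_intensity lam G)
       = ennreal (lam * pi * (\<integral>g. Fg \<alpha> D T s g \<partial>G))"
proof -
  interpret G: prob_space G by (rule G(1))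
  have spG: "space G = UNIV" using sets_eq_imp_space_eq[OF G(2)] by simp
  have psf: "pair_sigma_finite lborel G"
    by (simp add: pair_sigma_finite_def lborel.sigma_finite_measure_axioms G.sigma_finite_measure_axioms)
  have sets_eq: "sets (lborel \<Otimes>\<^sub>M G) = sets (borel \<Otimes>\<^sub>M borel)"
    by (intro sets_pair_measure_cong) (auto simp: G(2))
  let ?f = "\<lambda>z. ennreal (1 - exp (- (s * useful_contrib \<alpha> D T z)))"
  have fm: "?f \<in> borel_measurable (lborel \<Otimes>\<^sub>M G)"
    using uc_meas2[of \<alpha> D T] by (simp add: measurable_cong_sets[OF sets_eq refl])
  have Fm: "Fg \<alpha> D T s \<in> borel_measurable G"
    using Fg_meas by (simp add: measurable_cong_sets[OF G(2) refl])
  have "(\<integral>\<^sup>+z. ?f z \<partial>(lborel \<Otimes>\<^sub>M G)) = (\<integral>\<^sup>+g. \<integral>\<^sup>+x. ?f (x, g) \<partial>lborel \<partial>G)"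
    by (rule pair_sigma_finite.nn_integral_snd[OF psf fm, symmetric])
  also have "\<dots> = (\<integral>\<^sup>+g. ennreal (pi * Fg \<alpha> D T s g) \<partial>G)"
    using G(3) by (intro nn_integral_cong_AE) (auto elim!: eventually_mono simp: inner_formula a D T s)
  finally have eq1: "(\<integral>\<^sup>+z. ?f z \<partial>(lborel \<Otimes>\<^sub>M G)) = (\<integral>\<^sup>+g. ennreal (pi * Fg \<alpha> D T s g) \<partial>G)" .
  have "(\<integral>\<^sup>+z. ?f z \<partial>(lborel \<Otimes>\<^sub>M G)) \<le> (\<integral>\<^sup>+z. indicator (cball (0::real\<times>real) D \<times> space G) z \<partial>(lborel \<Otimes>\<^sub>M G))"
  proof (rule nn_integral_mono)
    fix z :: "(real \<times> real) \<times> real"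
    assume "z \<in> space (lborel \<Otimes>\<^sub>M G)"
    show "?f z \<le> indicator (cball 0 D \<times> space G) z"
      using s T uc_nonneg[OF T, of \<alpha> D z]
      by (cases z) (auto simp: spG indicator_def useful_contrib_def Let_def)
  qed
  also have "\<dots> = emeasure lborel (cball (0::real\<times>real) D) * emeasure G (space G)"
    by (simp add: G.emeasure_pair_measure_Times)
  also have "\<dots> < \<infinity>" using D by (simp add: emeasure_cball G.emeasure_space_1)
  finally have fin: "(\<integral>\<^sup>+g. ennreal (pi * Fg \<alpha> D T s g) \<partial>G) < \<infinity>" using eq1 by simp
  have nn: "AE g in G. 0 \<le> pi * Fg \<alpha> D T s g"
    using G(3) by (auto elim!: eventually_mono intro!: mult_nonneg_nonneg Fg_nonneg a D T s)
  have "(\<integral>g. pi * Fg \<alpha> D T s g \<partial>G) = enn2real (\<integral>\<^sup>+g. ennreal (pi * Fg \<alpha> D T s g) \<partial>G)"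
    by (rule integral_eq_nn_integral) (use Fm nn in auto)
  then have "(\<integral>\<^sup>+g. ennreal (pi * Fg \<alpha> D T s g) \<partial>G) = ennreal (pi * (\<integral>g. Fg \<alpha> D T s g \<partial>G))"
    using fin by (simp add: ennreal_enn2real_if less_top[symmetric])
  have "(\<integral>\<^sup>+z. ?f z \<partial>marked_intensity lam G) = ennreal lam * (\<integral>\<^sup>+z. ?f z \<partial>(lborel \<Otimes>\<^sub>M G))"
    unfolding marked_intensity_def by (rule nn_integral_scale_measure[OF fm])
  also have "\<dots> = ennreal lam * ennreal (pi * (\<integral>g. Fg \<alpha> D T s g \<partial>G))"
    using eq1 \<open>_ = ennreal (pi * _)\<close> by simp
  also have "\<dots> = ennreal (lam * pi * (\<integral>g. Fg \<alpha> D T s g \<partial>G))"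
    using lam by (simp add: ennreal_mult'[symmetric] mult_ac)
  finally show ?thesis .
qed


lemma prm_D:
  assumes "poisson_random_measure M N \<mu>"
  shows prm_prob: "prob_space M"
    and prm_sets: "\<And>\<omega>. \<omega> \<in> space M \<Longrightarrow> sets (N \<omega>) = sets \<mu>"
    and prm_meas: "\<And>A. A \<in> sets \<mu> \<Longrightarrow> (\<lambda>\<omega>. emeasure (N \<omega>) A) \<in> borel_measurable M"
    and prm_pois: "\<And>A k. A \<in> sets \<mu> \<Longrightarrow> emeasure \<mu> A < \<infinity> \<Longrightarrow>
        measure M {\<omega>\<in>space M. emeasure (N \<omega>) A = of_nat k}
             = exp (- enn2real (emeasure \<mu> A)) * enn2real (emeasure \<mu> A) ^ k / fact k"
    and prm_indep: "\<And>(I::nat set) A. finite I \<Longrightarrow> A ` I \<subseteq> sets \<mu> \<Longrightarrow> disjoint_family_on A I \<Longrightarrow>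
        prob_space.indep_vars M (\<lambda>_. borel) (\<lambda>i \<omega>. emeasure (N \<omega>) (A i)) I"
  using assms unfolding poisson_random_measure_def by blast+

lemma prm_nat:
  assumes P: "poisson_random_measure M N \<mu>" and A: "A \<in> sets \<mu>" "emeasure \<mu> A < \<infinity>"
  shows "AE \<omega> in M. \<exists>k::nat. emeasure (N \<omega>) A = of_nat k"
proof -
  interpret prob_space M using prm_prob[OF P] .
  note [measurable] = prm_meas[OF P A(1)]
  define E where "E k = {\<omega>\<in>space M. emeasure (N \<omega>) A = of_nat k}" for k :: nat
  have E[measurable]: "E k \<in> sets M" for k unfolding E_def by measurable
  have dj: "disjoint_family E" by (auto simp: disjoint_family_on_def E_def)
  define m where "m = enn2real (emeasure \<mu> A)"
  have "(\<lambda>k. measure M (E k)) sums measure M (\<Union>k. E k)"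
    by (rule measure_UNION) (use E dj in auto)
  moreover have "(\<lambda>k. measure M (E k)) = (\<lambda>k. exp (- m) * (m ^ k /\<^sub>R fact k))"
    by (auto simp: E_def prm_pois[OF P A] m_def fun_eq_iff divide_inverse)
  moreover have "(\<lambda>k. exp (- m) * (m ^ k /\<^sub>R fact k)) sums (exp (- m) * exp m)"
    by (intro sums_mult exp_converges)
  ultimately have "measure M (\<Union>k. E k) = 1"
    by (metis sums_unique2 exp_minus_inverse mult.commute)
  then have "AE \<omega> in M. \<omega> \<in> (\<Union>k. E k)" by (rule AE_prob_1)
  then show ?thesis by (auto simp: E_def)
qed

lemma prm_laplace1:
  assumes P: "poisson_random_measure M N \<mu>" and A: "A \<in> sets \<mu>" "emeasure \<mu> A < \<infinity>" and a: "0 \<le> a"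
  shows "(\<integral>\<omega>. exp (- (a * enn2real (emeasure (N \<omega>) A))) \<partial>M) = exp (- (enn2real (emeasure \<mu> A) * (1 - exp (- a))))"
proof -
  interpret prob_space M using prm_prob[OF P] .
  note [measurable] = prm_meas[OF P A(1)]
  define E where "E k = {\<omega>\<in>space M. emeasure (N \<omega>) A = of_nat k}" for k :: nat
  have E[measurable]: "E k \<in> sets M" for k unfolding E_def by measurable
  define m where "m = enn2real (emeasure \<mu> A)"
  have "AE \<omega> in M. ennreal (exp (- (a * enn2real (emeasure (N \<omega>) A)))) = (\<Sum>k. ennreal (exp (- a * real k)) * indicator (E k) \<omega>)"
    using prm_nat[OF P A] AE_space
  proof (eventually_elim)
    case (elim \<omega>)
    then obtain j where j: "emeasure (N \<omega>) A = of_nat j" by auto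
    have "(\<Sum>k. ennreal (exp (- a * real k)) * indicator (E k) \<omega>) = (\<Sum>k\<in>{j}. ennreal (exp (- a * real k)) * indicator (E k) \<omega>)"
      by (rule suminf_finite) (auto simp: E_def j indicator_def)
    also have "\<dots> = ennreal (exp (- (a * enn2real (emeasure (N \<omega>) A))))"
      using elim by (auto simp: E_def j indicator_def)
    finally show ?case ..
  qed
  then have "(\<integral>\<^sup>+\<omega>. ennreal (exp (- (a * enn2real (emeasure (N \<omega>) A)))) \<partial>M) = (\<integral>\<^sup>+\<omega>. (\<Sum>k. ennreal (exp (- a * real k)) * indicator (E k) \<omega>) \<partial>M)"
    by (rule nn_integral_cong_AE)
  also have "\<dots> = (\<Sum>k. \<integral>\<^sup>+\<omega>. ennreal (exp (- a * real k)) * indicator (E k) \<omega> \<partial>M)"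
    by (rule nn_integral_suminf) measurable
  also have "\<dots> = (\<Sum>k. ennreal (exp (- a * real k) * (exp (- m) * m ^ k / fact k)))"
    by (intro suminf_cong) (simp add: nn_integral_cmult_indicator emeasure_eq_measure E_def prm_pois[OF P A] m_def ennreal_mult'[symmetric])
  also have "\<dots> = ennreal (exp (- m) * exp (m * exp (- a)))"
  proof (rule suminf_ennreal_eq)
    show "0 \<le> exp (- a * real k) * (exp (- m) * m ^ k / fact k)" for k by (simp add: m_def)
    have "(\<lambda>k. exp (- m) * ((m * exp (- a)) ^ k /\<^sub>R fact k)) sums (exp (- m) * exp (m * exp (- a)))"
      by (intro sums_mult exp_converges)
    moreover have "(\<lambda>k. exp (- m) * ((m * exp (- a)) ^ k /\<^sub>R fact k)) = (\<lambda>k. exp (- a * real k) * (exp (- m) * m ^ k / fact k))"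
      by (auto simp: fun_eq_iff power_mult_distrib exp_of_nat2_mult[symmetric] divide_inverse mult_ac)
    ultimately show "(\<lambda>k. exp (- a * real k) * (exp (- m) * m ^ k / fact k)) sums (exp (- m) * exp (m * exp (- a)))" by simp
  qed
  finally have nn: "(\<integral>\<^sup>+\<omega>. ennreal (exp (- (a * enn2real (emeasure (N \<omega>) A)))) \<partial>M) = ennreal (exp (- m) * exp (m * exp (- a)))" .
  have "(\<integral>\<omega>. exp (- (a * enn2real (emeasure (N \<omega>) A))) \<partial>M) = enn2real (\<integral>\<^sup>+\<omega>. ennreal (exp (- (a * enn2real (emeasure (N \<omega>) A)))) \<partial>M)"
    by (rule integral_eq_nn_integral) auto
  also have "\<dots> = exp (- m) * exp (m * exp (- a))" by (simp add: nn)
  also have "\<dots> = exp (- (m * (1 - exp (- a))))" by (simp add: exp_add[symmetric] algebra_simps)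
  finally show ?thesis by (simp add: m_def)
qed

lemma prm_laplace_fin:
  fixes I :: "nat set"
  assumes P: "poisson_random_measure M N \<mu>" and I: "finite I"
    and A: "\<And>i. i \<in> I \<Longrightarrow> A i \<in> sets \<mu>" "\<And>i. i \<in> I \<Longrightarrow> emeasure \<mu> (A i) < \<infinity>"
    and dj: "disjoint_family_on A I" and a: "\<And>i. i \<in> I \<Longrightarrow> 0 \<le> a i"
  shows "(\<integral>\<omega>. exp (- (\<Sum>i\<in>I. a i * enn2real (emeasure (N \<omega>) (A i)))) \<partial>M)
       = exp (- (\<Sum>i\<in>I. enn2real (emeasure \<mu> (A i)) * (1 - exp (- a i))))"
proof -
  interpret prob_space M using prm_prob[OF P] .
  define X where "X i \<omega> = exp (- (a i * enn2real (emeasure (N \<omega>) (A i))))" for i \<omega>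
  have sub: "A ` I \<subseteq> sets \<mu>" using A by auto
  have ind: "indep_vars (\<lambda>_. borel) X I"
    unfolding X_def
    by (rule indep_vars_compose2[where Y="\<lambda>i x. exp (- (a i * enn2real x))", OF prm_indep[OF P I sub dj]])
       auto
  have Xm: "i \<in> I \<Longrightarrow> X i \<in> borel_measurable M" for i
    unfolding X_def using prm_meas[OF P A(1)] by measurable
  have Xi: "i \<in> I \<Longrightarrow> integrable M (X i)" for i
  proof (rule integrable_const_bound[where B=1])
    assume i: "i \<in> I"
    show "AE x in M. norm (X i x) \<le> 1" using a[OF i] by (auto simp: X_def)
    show "X i \<in> borel_measurable M" using Xm[OF i] .
  qed
  have "(\<integral>\<omega>. exp (- (\<Sum>i\<in>I. a i * enn2real (emeasure (N \<omega>) (A i)))) \<partial>M) = (\<integral>\<omega>. (\<Prod>i\<in>I. X i \<omega>) \<partial>M)"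
    using I by (simp add: X_def sum_negf[symmetric] exp_sum)
  also have "\<dots> = (\<Prod>i\<in>I. \<integral>\<omega>. X i \<omega> \<partial>M)"
    by (rule indep_vars_lebesgue_integral[OF I ind Xi])
  also have "\<dots> = (\<Prod>i\<in>I. exp (- (enn2real (emeasure \<mu> (A i)) * (1 - exp (- a i)))))"
    by (intro prod.cong refl) (simp add: X_def prm_laplace1[OF P A(1) A(2) a])
  also have "\<dots> = exp (- (\<Sum>i\<in>I. enn2real (emeasure \<mu> (A i)) * (1 - exp (- a i))))"
    using I by (simp add: sum_negf[symmetric] exp_sum)
  finally show ?thesis .
qed


lemma prm_finite_int:
  assumes P: "poisson_random_measure M N \<mu>" and f: "f \<in> borel_measurable \<mu>" "\<And>x. 0 \<le> f x"
    and B: "B \<in> sets \<mu>" "emeasure \<mu> B < \<infinity>" and fB: "\<And>x. x \<in> space \<mu> \<Longrightarrow> x \<notin> B \<Longrightarrow> f x = 0"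
  shows "AE \<omega> in M. (\<integral>\<^sup>+x. ennreal (f x) \<partial>N \<omega>) < \<infinity>"
proof -
  interpret prob_space M using prm_prob[OF P] .
  define Ak where "Ak k = {x\<in>space \<mu>. real k \<le> f x} \<inter> B" for k :: nat
  have Ak[measurable]: "Ak k \<in> sets \<mu>" for k unfolding Ak_def using f(1) B(1) by measurable
  have Akfin: "emeasure \<mu> (Ak k) < \<infinity>" for k
    using emeasure_mono[of "Ak k" B \<mu>] B by (auto simp: Ak_def)
  have dec: "decseq Ak" by (auto simp: decseq_def Ak_def)
  have "(\<Inter>k. Ak k) = {}"
  proof (safe)
    fix x assume "x \<in> (\<Inter>k. Ak k)"
    moreover obtain k :: nat where "f x < real k" using reals_Archimedean2 by blast
    ultimately show "x \<in> {}" by (auto simp: Ak_def dest!: spec[of _ k])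
  qed
  moreover have "range Ak \<subseteq> sets \<mu>" using Ak by auto
  then have "(\<lambda>k. emeasure \<mu> (Ak k)) \<longlonglongrightarrow> emeasure \<mu> (\<Inter>k. Ak k)"
    by (intro Lim_emeasure_decseq dec) (use Akfin in \<open>auto simp: less_top\<close>)
  ultimately have lim0: "(\<lambda>k. emeasure \<mu> (Ak k)) \<longlonglongrightarrow> 0" by simp
  define mk where "mk k = enn2real (emeasure \<mu> (Ak k))" for k
  have "mk \<longlonglongrightarrow> 0" unfolding mk_def using tendsto_enn2real[of _ 0] lim0 by simp
  then have lim1: "(\<lambda>k. 1 - exp (- mk k)) \<longlonglongrightarrow> 0"
    by (auto intro!: tendsto_eq_intros)
  define Bad where "Bad = {\<omega>\<in>space M. \<forall>k. emeasure (N \<omega>) (Ak k) \<noteq> 0}"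
  have [measurable]: "(\<lambda>\<omega>. emeasure (N \<omega>) (Ak k)) \<in> borel_measurable M" for k
    by (rule prm_meas[OF P Ak])
  have Bad_m[measurable]: "Bad \<in> sets M" unfolding Bad_def by measurable
  have "prob Bad \<le> 1 - exp (- mk k)" for k
  proof -
    have "Bad \<subseteq> space M - {\<omega>\<in>space M. emeasure (N \<omega>) (Ak k) = of_nat 0}" by (auto simp: Bad_def)
    then have "prob Bad \<le> prob (space M - {\<omega>\<in>space M. emeasure (N \<omega>) (Ak k) = of_nat 0})"
      by (intro finite_measure_mono) auto
    also have "\<dots> = 1 - prob {\<omega>\<in>space M. emeasure (N \<omega>) (Ak k) = of_nat 0}"
      by (rule prob_compl) measurable
    also have "\<dots> = 1 - exp (- mk k)"
      using prm_pois[OF P Ak[of k] Akfin[of k], of 0] by (simp add: mk_def)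
    finally show ?thesis .
  qed
  then have "prob Bad \<le> 0" by (intro LIMSEQ_le_const[OF lim1]) auto
  then have "prob (space M - Bad) = 1" by (simp add: prob_compl measure_le_0_iff)
  then have aeB: "AE \<omega> in M. \<omega> \<in> space M - Bad" by (rule AE_prob_1)
  show ?thesis
    using aeB prm_nat[OF P B] AE_space
  proof eventually_elim
    case (elim \<omega>)
    then obtain k where k: "emeasure (N \<omega>) (Ak k) = 0" by (auto simp: Bad_def)
    from elim obtain j :: nat where j: "emeasure (N \<omega>) B = of_nat j" by auto
    have sN: "sets (N \<omega>) = sets \<mu>" using prm_sets[OF P] elim by auto
    have spN: "space (N \<omega>) = space \<mu>" using sets_eq_imp_space_eq[OF sN] .
    have AkN: "Ak k \<in> sets (N \<omega>)" and BN: "B \<in> sets (N \<omega>)" using sN Ak B by auto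
    have "(\<integral>\<^sup>+x. ennreal (f x) \<partial>N \<omega>) \<le> (\<integral>\<^sup>+x. ennreal (real k) * indicator B x + \<infinity> * indicator (Ak k) x \<partial>N \<omega>)"
    proof (rule nn_integral_mono)
      fix x assume x: "x \<in> space (N \<omega>)"
      show "ennreal (f x) \<le> ennreal (real k) * indicator B x + \<infinity> * indicator (Ak k) x"
      proof (cases "x \<in> B")
        case False then show ?thesis using fB x spN by auto
      next
        case True
        show ?thesis
        proof (cases "x \<in> Ak k")
          case True then show ?thesis by simp
        next
          case False
          then have "f x < real k" using \<open>x \<in> B\<close> x spN by (auto simp: Ak_def)
          then show ?thesis using \<open>x \<in> B\<close> False by (simp add: ennreal_leI)
        qed
      qed
    qed
    also have "\<dots> = ennreal (real k) * emeasure (N \<omega>) B + \<infinity> * emeasure (N \<omega>) (Ak k)"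
      using AkN BN by (simp add: nn_integral_add nn_integral_cmult_indicator)
    also have "\<dots> < \<infinity>" using k j by (simp add: ennreal_of_nat_eq_real_of_nat[symmetric] ennreal_mult_less_top of_nat_less_top)
    finally show ?case .
  qed
qed


lemma rep_sum:
  fixes \<phi> :: "ennreal \<Rightarrow> 'b::semiring_1"
  assumes I: "finite I" and mem: "\<And>i. i \<in> I \<Longrightarrow> x \<in> A i \<longleftrightarrow> F x = a i"
    and cov: "F x \<noteq> 0 \<Longrightarrow> \<exists>i\<in>I. F x = a i" and inj: "inj_on a I" and nz: "\<And>i. i \<in> I \<Longrightarrow> a i \<noteq> 0"
    and \<phi>0: "\<phi> 0 = 0"
  shows "\<phi> (F x) = (\<Sum>i\<in>I. \<phi> (a i) * indicator (A i) x)"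
proof (cases "F x = 0")
  case True
  then have "x \<notin> A i" if "i \<in> I" for i using mem[OF that] nz[OF that] by auto
  then show ?thesis using True \<phi>0 by (simp add: indicator_def)
next
  case False
  then obtain j where j: "j \<in> I" "F x = a j" using cov by auto
  have "(\<Sum>i\<in>I. \<phi> (a i) * indicator (A i) x) = (\<Sum>i\<in>I. if i = j then \<phi> (a j) else 0)"
  proof (intro sum.cong refl)
    fix i assume i: "i \<in> I"
    have "x \<in> A i \<longleftrightarrow> i = j" using mem[OF i] j inj i by (auto dest: inj_onD)
    then show "\<phi> (a i) * indicator (A i) x = (if i = j then \<phi> (a j) else 0)" by (auto simp: indicator_def)
  qed
  also have "\<dots> = \<phi> (a j)" using I j by simp
  finally show ?thesis using j by simp
qed

lemma prm_laplace:
  assumes P: "poisson_random_measure M N \<mu>" and f: "f \<in> borel_measurable \<mu>" "\<And>x. 0 \<le> f x"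
    and B: "B \<in> sets \<mu>" "emeasure \<mu> B < \<infinity>" and fB: "\<And>x. x \<in> space \<mu> \<Longrightarrow> x \<notin> B \<Longrightarrow> f x = 0"
  shows "(\<integral>\<omega>. exp (- enn2real (\<integral>\<^sup>+x. ennreal (f x) \<partial>N \<omega>)) \<partial>M) = exp (- (\<integral>x. 1 - exp (- f x) \<partial>\<mu>))"
proof -
  interpret prob_space M using prm_prob[OF P] .
  have fe: "(\<lambda>x. ennreal (f x)) \<in> borel_measurable \<mu>" using f(1) by measurable
  obtain F where Fs: "\<And>i. simple_function \<mu> (F i)" and Finc: "incseq F" and Ftop: "\<And>i x. F i x < top"
    and Fsup: "\<And>x. (SUP i. F i x) = ennreal (f x)"
    using borel_measurable_implies_simple_function_sequence'[OF fe] by blast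
  have Fle: "F i x \<le> ennreal (f x)" for i x using Fsup[of x] by (metis SUP_upper UNIV_I)
  have Fm[measurable]: "F i \<in> borel_measurable \<mu>" for i using Fs by (rule borel_measurable_simple_function)
  have sN: "\<And>\<omega>. \<omega> \<in> space M \<Longrightarrow> sets (N \<omega>) = sets \<mu>" by (rule prm_sets[OF P])
  have spN: "\<And>\<omega>. \<omega> \<in> space M \<Longrightarrow> space (N \<omega>) = space \<mu>" using sets_eq_imp_space_eq[OF sN] by blast
  define S where "S n = F n ` space \<mu> - {0}" for n
  have Sfin: "finite (S n)" for n using simple_functionD(1)[OF Fs[of n]] by (simp add: S_def)
  define I where "I n = {..<card (S n)}" for n
  define a where "a n = (SOME h. bij_betw h (I n) (S n))" for n
  have abij: "bij_betw (a n) (I n) (S n)" for n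
    unfolding a_def I_def using ex_bij_betw_nat_finite[OF Sfin[of n]] by (metis lessThan_atLeast0 someI_ex)
  define A where "A n i = F n -` {a n i} \<inter> space \<mu>" for n i
  have Ifin: "finite (I n)" for n by (simp add: I_def)
  have aS: "i \<in> I n \<Longrightarrow> a n i \<in> S n" for n i using abij[of n] by (auto simp: bij_betw_def)
  have ainj: "inj_on (a n) (I n)" for n using abij[of n] by (auto simp: bij_betw_def)
  have anz: "i \<in> I n \<Longrightarrow> a n i \<noteq> 0" for n i using aS by (auto simp: S_def)
  have atop: "i \<in> I n \<Longrightarrow> a n i < top" for n i using aS[of i n] Ftop by (auto simp: S_def)
  have Ameas[measurable]: "A n i \<in> sets \<mu>" for n i unfolding A_def by (rule simple_functionD(2)[OF Fs])
  have mem: "x \<in> space \<mu> \<Longrightarrow> i \<in> I n \<Longrightarrow> x \<in> A n i \<longleftrightarrow> F n x = a n i" for x n i by (auto simp: A_def)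
  have cov: "x \<in> space \<mu> \<Longrightarrow> F n x \<noteq> 0 \<Longrightarrow> \<exists>i\<in>I n. F n x = a n i" for x n
  proof -
    assume x: "x \<in> space \<mu>" "F n x \<noteq> 0"
    then have "F n x \<in> S n" by (auto simp: S_def)
    then show ?thesis using abij[of n] by (auto simp: bij_betw_def)
  qed
  have AB: "i \<in> I n \<Longrightarrow> A n i \<subseteq> B" for n i
  proof
    fix x assume i: "i \<in> I n" and x: "x \<in> A n i"
    then have "F n x \<noteq> 0" "x \<in> space \<mu>" using anz[OF i] by (auto simp: A_def)
    then have "f x \<noteq> 0" using Fle[of n x] by (auto simp: le_zero_eq)
    then show "x \<in> B" using fB \<open>x \<in> space \<mu>\<close> by auto
  qed
  have Afin: "i \<in> I n \<Longrightarrow> emeasure \<mu> (A n i) < \<infinity>" for n i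
    using emeasure_mono[OF AB[of i n] B(1)] B(2) by (meson le_less_trans)
  have dj: "disjoint_family_on (A n) (I n)" for n
    using ainj[of n] by (auto simp: disjoint_family_on_def A_def dest: inj_onD)
  have G1: "(\<integral>\<^sup>+x. F n x \<partial>N \<omega>) = (\<Sum>i\<in>I n. a n i * emeasure (N \<omega>) (A n i))" if \<omega>: "\<omega> \<in> space M" for n \<omega>
  proof -
    have "(\<integral>\<^sup>+x. F n x \<partial>N \<omega>) = (\<integral>\<^sup>+x. (\<Sum>i\<in>I n. a n i * indicator (A n i) x) \<partial>N \<omega>)"
      by (intro nn_integral_cong rep_sum[where \<phi>=id, simplified] Ifin mem cov ainj anz)
         (use spN[OF \<omega>] in auto)
    also have "\<dots> = (\<Sum>i\<in>I n. a n i * emeasure (N \<omega>) (A n i))"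
      using sN[OF \<omega>] by (simp add: nn_integral_sum nn_integral_cmult_indicator)
    finally show ?thesis .
  qed
  have NAm[measurable]: "(\<lambda>\<omega>. emeasure (N \<omega>) (A n i)) \<in> borel_measurable M" for n i
    by (rule prm_meas[OF P Ameas])
  have G1m[measurable]: "(\<lambda>\<omega>. \<integral>\<^sup>+x. F n x \<partial>N \<omega>) \<in> borel_measurable M" for n
  proof -
    have "(\<lambda>\<omega>. \<Sum>i\<in>I n. a n i * emeasure (N \<omega>) (A n i)) \<in> borel_measurable M" by measurable
    then show ?thesis by (rule measurable_cong[THEN iffD1, rotated]) (simp add: G1)
  qed
  have Ninc: "incseq (\<lambda>n. \<integral>\<^sup>+x. F n x \<partial>N \<omega>)" for \<omega>
    using Finc by (auto simp: incseq_def le_fun_def intro!: nn_integral_mono)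
  have G1': "(\<integral>\<^sup>+x. ennreal (f x) \<partial>N \<omega>) = (SUP n. \<integral>\<^sup>+x. F n x \<partial>N \<omega>)" if \<omega>: "\<omega> \<in> space M" for \<omega>
  proof -
    have "(\<integral>\<^sup>+x. ennreal (f x) \<partial>N \<omega>) = (\<integral>\<^sup>+x. (SUP n. F n x) \<partial>N \<omega>)" by (simp add: Fsup)
    also have "\<dots> = (SUP n. \<integral>\<^sup>+x. F n x \<partial>N \<omega>)"
      by (rule nn_integral_monotone_convergence_SUP[OF Finc])
         (simp add: measurable_cong_sets[OF sN[OF \<omega>] refl])
    finally show ?thesis .
  qed
  have Lm: "(\<lambda>\<omega>. exp (- enn2real (\<integral>\<^sup>+x. ennreal (f x) \<partial>N \<omega>))) \<in> borel_measurable M"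
  proof -
    have "(\<lambda>\<omega>. exp (- enn2real (SUP n. \<integral>\<^sup>+x. F n x \<partial>N \<omega>))) \<in> borel_measurable M" by measurable
    then show ?thesis by (rule measurable_cong[THEN iffD1, rotated]) (simp add: G1')
  qed
  define a' where "a' n i = enn2real (a n i)" for n i
  define m where "m n i = enn2real (emeasure \<mu> (A n i))" for n i
  have LHSn: "(\<integral>\<omega>. exp (- enn2real (\<integral>\<^sup>+x. F n x \<partial>N \<omega>)) \<partial>M) = exp (- (\<Sum>i\<in>I n. m n i * (1 - exp (- a' n i))))" for n
  proof -
    have "AE \<omega> in M. \<forall>i\<in>I n. emeasure (N \<omega>) (A n i) < \<infinity>"
    proof (rule AE_finite_allI[OF Ifin])
      fix i assume i: "i \<in> I n"
      show "AE \<omega> in M. emeasure (N \<omega>) (A n i) < \<infinity>"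
        using prm_nat[OF P Ameas Afin[OF i]] by eventually_elim (auto simp: of_nat_less_top)
    qed
    then have "AE \<omega> in M. exp (- enn2real (\<integral>\<^sup>+x. F n x \<partial>N \<omega>)) = exp (- (\<Sum>i\<in>I n. a' n i * enn2real (emeasure (N \<omega>) (A n i))))"
      using AE_space
    proof eventually_elim
      case (elim \<omega>)
      have "enn2real (\<integral>\<^sup>+x. F n x \<partial>N \<omega>) = (\<Sum>i\<in>I n. enn2real (a n i * emeasure (N \<omega>) (A n i)))"
        using elim atop by (simp add: G1 enn2real_sum ennreal_mult_less_top o_def)
      also have "\<dots> = (\<Sum>i\<in>I n. a' n i * enn2real (emeasure (N \<omega>) (A n i)))"
        by (simp add: a'_def enn2real_mult)
      finally show ?case by simp
    qed
    then have "(\<integral>\<omega>. exp (- enn2real (\<integral>\<^sup>+x. F n x \<partial>N \<omega>)) \<partial>M) = (\<integral>\<omega>. exp (- (\<Sum>i\<in>I n. a' n i * enn2real (emeasure (N \<omega>) (A n i)))) \<partial>M)"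
      by (intro integral_cong_AE) measurable
    also have "\<dots> = exp (- (\<Sum>i\<in>I n. m n i * (1 - exp (- a' n i))))"
      unfolding m_def by (rule prm_laplace_fin[OF P Ifin Ameas Afin dj]) (auto simp: a'_def enn2real_nonneg)
    finally show ?thesis .
  qed
  have RHSn: "(\<integral>x. 1 - exp (- enn2real (F n x)) \<partial>\<mu>) = (\<Sum>i\<in>I n. m n i * (1 - exp (- a' n i)))" for n
  proof -
    have "(\<integral>x. 1 - exp (- enn2real (F n x)) \<partial>\<mu>) = (\<integral>x. (\<Sum>i\<in>I n. (1 - exp (- a' n i)) * indicator (A n i) x) \<partial>\<mu>)"
      unfolding a'_def
      by (intro Bochner_Integration.integral_cong refl rep_sum[where \<phi>="\<lambda>v. 1 - exp (- enn2real v)"] Ifin mem cov ainj anz) auto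
    also have "\<dots> = (\<Sum>i\<in>I n. \<integral>x. (1 - exp (- a' n i)) * indicator (A n i) x \<partial>\<mu>)"
      by (rule Bochner_Integration.integral_sum) (use Afin in auto)
    also have "\<dots> = (\<Sum>i\<in>I n. (1 - exp (- a' n i)) * measure \<mu> (A n i))"
      by (intro sum.cong refl) simp
    also have "\<dots> = (\<Sum>i\<in>I n. m n i * (1 - exp (- a' n i)))" by (simp add: m_def measure_def mult_ac)
    finally show ?thesis .
  qed
  have fin: "AE \<omega> in M. (\<integral>\<^sup>+x. ennreal (f x) \<partial>N \<omega>) < \<infinity>"
    using prm_finite_int[of M N \<mu> f B] P f B fB by blast
  have limL: "(\<lambda>n. \<integral>\<omega>. exp (- enn2real (\<integral>\<^sup>+x. F n x \<partial>N \<omega>)) \<partial>M) \<longlonglongrightarrow> (\<integral>\<omega>. exp (- enn2real (\<integral>\<^sup>+x. ennreal (f x) \<partial>N \<omega>)) \<partial>M)"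
  proof (rule integral_dominated_convergence[where w="\<lambda>_. 1"])
    show "(\<lambda>\<omega>. exp (- enn2real (\<integral>\<^sup>+x. ennreal (f x) \<partial>N \<omega>))) \<in> borel_measurable M" by (rule Lm)
    show "(\<lambda>\<omega>. exp (- enn2real (\<integral>\<^sup>+x. F n x \<partial>N \<omega>))) \<in> borel_measurable M" for n by measurable
    show "integrable M (\<lambda>_. 1::real)" by simp
    show "AE \<omega> in M. norm (exp (- enn2real (\<integral>\<^sup>+x. F n x \<partial>N \<omega>))) \<le> 1" for n
      by (auto simp: enn2real_nonneg)
    show "AE \<omega> in M. (\<lambda>n. exp (- enn2real (\<integral>\<^sup>+x. F n x \<partial>N \<omega>))) \<longlonglongrightarrow> exp (- enn2real (\<integral>\<^sup>+x. ennreal (f x) \<partial>N \<omega>))"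
      using fin AE_space
    proof eventually_elim
      case (elim \<omega>)
      define L where "L = (\<integral>\<^sup>+x. ennreal (f x) \<partial>N \<omega>)"
      have "(\<lambda>n. \<integral>\<^sup>+x. F n x \<partial>N \<omega>) \<longlonglongrightarrow> L"
        unfolding L_def G1'[OF elim(2)] by (rule LIMSEQ_SUP[OF Ninc])
      moreover have "L = ennreal (enn2real L)" using elim(1) by (simp add: L_def less_top)
      ultimately have "(\<lambda>n. \<integral>\<^sup>+x. F n x \<partial>N \<omega>) \<longlonglongrightarrow> ennreal (enn2real L)" by simp
      then have "(\<lambda>n. enn2real (\<integral>\<^sup>+x. F n x \<partial>N \<omega>)) \<longlonglongrightarrow> enn2real L"
        by (rule tendsto_enn2real) (simp add: enn2real_nonneg)
      from tendsto_exp[OF tendsto_minus[OF this]] show ?case unfolding L_def .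
    qed
  qed
  have limR: "(\<lambda>n. \<integral>x. 1 - exp (- enn2real (F n x)) \<partial>\<mu>) \<longlonglongrightarrow> (\<integral>x. 1 - exp (- f x) \<partial>\<mu>)"
  proof (rule integral_dominated_convergence[where w="indicator B"])
    show "(\<lambda>x. 1 - exp (- f x)) \<in> borel_measurable \<mu>" using f(1) by measurable
    show "(\<lambda>x. 1 - exp (- enn2real (F n x))) \<in> borel_measurable \<mu>" for n by measurable
    show "integrable \<mu> (indicator B :: _ \<Rightarrow> real)" using B by simp
    show "AE x in \<mu>. norm (1 - exp (- enn2real (F n x))) \<le> indicator B x" for n
    proof (rule AE_I2)
      fix x assume x: "x \<in> space \<mu>"
      show "norm (1 - exp (- enn2real (F n x))) \<le> indicator B x"
      proof (cases "x \<in> B")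
        case False
        then have "F n x = 0" using Fle[of n x] fB[OF x] by simp
        then show ?thesis by simp
      next
        case True then show ?thesis by (simp add: enn2real_nonneg)
      qed
    qed
    show "AE x in \<mu>. (\<lambda>n. 1 - exp (- enn2real (F n x))) \<longlonglongrightarrow> 1 - exp (- f x)"
    proof (rule AE_I2)
      fix x
      have inc: "incseq (\<lambda>n. F n x)" using Finc by (auto simp: incseq_def le_fun_def)
      have "(\<lambda>n. F n x) \<longlonglongrightarrow> ennreal (f x)" using LIMSEQ_SUP[OF inc] by (simp add: Fsup)
      then have "(\<lambda>n. enn2real (F n x)) \<longlonglongrightarrow> f x" by (rule tendsto_enn2real) (simp add: f(2))
      from tendsto_diff[OF tendsto_const tendsto_exp[OF tendsto_minus[OF this]]]
      show "(\<lambda>n. 1 - exp (- enn2real (F n x))) \<longlonglongrightarrow> 1 - exp (- f x)" .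
    qed
  qed
  have "(\<lambda>n. \<integral>\<omega>. exp (- enn2real (\<integral>\<^sup>+x. F n x \<partial>N \<omega>)) \<partial>M) = (\<lambda>n. exp (- (\<integral>x. 1 - exp (- enn2real (F n x)) \<partial>\<mu>)))"
    by (simp add: LHSn RHSn)
  moreover have "(\<lambda>n. exp (- (\<integral>x. 1 - exp (- enn2real (F n x)) \<partial>\<mu>))) \<longlonglongrightarrow> exp (- (\<integral>x. 1 - exp (- f x) \<partial>\<mu>))"
    by (intro tendsto_intros limR)
  ultimately show ?thesis using limL LIMSEQ_unique by metis
qed


theorem lemma2:
  fixes M :: "'w measure"
    and N :: "'w \<Rightarrow> ((real \<times> real) \<times> real) measure"
    and G :: "real measure"
    and lam \<alpha> D T s :: real
  assumes "lam > 0" and "\<alpha> > 2" and "D > 0" and "T \<ge> 0" and "s > 0"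
    and "prob_space G" and "sets G = sets borel"
    and "AE g in G. g \<ge> 0"
    and "integrable G (\<lambda>g. g)" and "(\<integral>g. g \<partial>G) = 1"
    and "integrable G (\<lambda>g. g\<^sup>2)"
    and "poisson_random_measure M N (marked_intensity lam G)"
  shows "(\<integral>\<omega>. exp (- s * useful_power N \<alpha> D T \<omega>) \<partial>M)
       = exp (- (lam * pi * (\<integral>g.
            min_DT \<alpha> D T g powr (2 / \<alpha>) * (1 - exp (- s * g * max_DT \<alpha> D T g))
          + (s * g) powr (2 / \<alpha>) * upper_Gamma (1 - 2 / \<alpha>) (s * g * max_DT \<alpha> D T g) \<partial>G)))"
proof -
  note lam = assms(1) and a = assms(2) and D = assms(3) and T = assms(4) and s = assms(5)
    and G = assms(6,7,8) and P = assms(12)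
  define \<mu> where "\<mu> = marked_intensity lam G"
  interpret G: prob_space G by (rule G(1))
  interpret M: prob_space M using prm_prob[OF P] .
  have spG: "space G = UNIV" using sets_eq_imp_space_eq[OF G(2)] by simp
  have sets_mu: "sets \<mu> = sets (borel \<Otimes>\<^sub>M borel)"
    unfolding \<mu>_def marked_intensity_def sets_scale_measure
    by (intro sets_pair_measure_cong) (auto simp: G(2))
  define f where "f z = s * useful_contrib \<alpha> D T z" for z
  have fm: "f \<in> borel_measurable \<mu>"
    unfolding f_def using uc_meas2[of \<alpha> D T] by (simp add: measurable_cong_sets[OF sets_mu refl])
  have fnn: "0 \<le> f z" for z unfolding f_def using s uc_nonneg[OF T] by simp
  define B where "B = cball (0::real\<times>real) D \<times> space G"
  have Bs: "B \<in> sets \<mu>" unfolding B_def \<mu>_def marked_intensity_def sets_scale_measure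
    by (intro pair_measureI) auto
  have Bfin: "emeasure \<mu> B < \<infinity>"
    using D lam unfolding B_def \<mu>_def marked_intensity_def
    by (simp add: G.emeasure_pair_measure_Times emeasure_cball G.emeasure_space_1 ennreal_mult_less_top)
  have fB: "x \<in> space \<mu> \<Longrightarrow> x \<notin> B \<Longrightarrow> f x = 0" for x
    by (cases x) (auto simp: B_def spG f_def useful_contrib_def)
  have L: "(\<integral>\<omega>. exp (- enn2real (\<integral>\<^sup>+x. ennreal (f x) \<partial>N \<omega>)) \<partial>M) = exp (- (\<integral>x. 1 - exp (- f x) \<partial>\<mu>))"
    by (rule prm_laplace[OF P[folded \<mu>_def] fm fnn Bs Bfin fB])
  have "(\<integral>\<omega>. exp (- s * useful_power N \<alpha> D T \<omega>) \<partial>M) = (\<integral>\<omega>. exp (- enn2real (\<integral>\<^sup>+x. ennreal (f x) \<partial>N \<omega>)) \<partial>M)"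
  proof (intro Bochner_Integration.integral_cong refl)
    fix \<omega> assume \<omega>: "\<omega> \<in> space M"
    have sN: "sets (N \<omega>) = sets \<mu>" using prm_sets[OF P[folded \<mu>_def] \<omega>] .
    have um: "(\<lambda>x. ennreal (useful_contrib \<alpha> D T x)) \<in> borel_measurable (N \<omega>)"
      using uc_meas2[of \<alpha> D T] by (simp add: measurable_cong_sets[OF sN refl] measurable_cong_sets[OF sets_mu refl])
    have "(\<integral>\<^sup>+x. ennreal (f x) \<partial>N \<omega>) = (\<integral>\<^sup>+x. ennreal s * ennreal (useful_contrib \<alpha> D T x) \<partial>N \<omega>)"
      using s by (intro nn_integral_cong) (simp add: f_def ennreal_mult uc_nonneg[OF T])
    also have "\<dots> = ennreal s * (\<integral>\<^sup>+x. ennreal (useful_contrib \<alpha> D T x) \<partial>N \<omega>)"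
      by (rule nn_integral_cmult[OF um])
    finally show "exp (- s * useful_power N \<alpha> D T \<omega>) = exp (- enn2real (\<integral>\<^sup>+x. ennreal (f x) \<partial>N \<omega>))"
      using s by (simp add: useful_power_def enn2real_mult)
  qed
  also have "\<dots> = exp (- (\<integral>x. 1 - exp (- f x) \<partial>\<mu>))" by (rule L)
  also have "(\<integral>x. 1 - exp (- f x) \<partial>\<mu>) = enn2real (\<integral>\<^sup>+x. ennreal (1 - exp (- f x)) \<partial>\<mu>)"
    by (rule integral_eq_nn_integral) (use fm fnn in auto)
  also have "(\<integral>\<^sup>+x. ennreal (1 - exp (- f x)) \<partial>\<mu>) = ennreal (lam * pi * (\<integral>g. Fg \<alpha> D T s g \<partial>G))"
    unfolding \<mu>_def f_def by (rule partB[OF lam a D T s G])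
  also have "enn2real (ennreal (lam * pi * (\<integral>g. Fg \<alpha> D T s g \<partial>G))) = lam * pi * (\<integral>g. Fg \<alpha> D T s g \<partial>G)"
  proof -
    have "0 \<le> (\<integral>g. Fg \<alpha> D T s g \<partial>G)"
      using G(3) by (intro integral_nonneg_AE) (auto elim!: eventually_mono intro!: Fg_nonneg a D T s)
    then show ?thesis using lam by simp
  qed
  finally show ?thesis by (simp add: Fg_def)
qed

end
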